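(* Let $\mathcal{A}$ and $\mathcal{B}$ be equality languages, $c\in\mathbb{Z}_+$ and $k\in\mathbb{N}$. If $\neq_{c+1}\notin\langle\mathcal{A}\cup\mathcal{B}\rangle_{\leq k}$, then every satisfiable instance of $\mathrm{CSP}_{\le k}(\mathcal{A},\mathcal{B})$ has a solution whose range is contained in $[c]=\{1,\dots,c\}$.
   Context: An equality language is a structure with domain $\mathbb{N}$ and finite signature whose relations are first-order definable in $(\mathbb{N};=)$. $\neq_r=\{(t_1,\dots,t_r)\in\mathbb{N}^r:|\{t_1,\dots,t_r\}|=r\}$. $\langle\mathcal{A}\cup\mathcal{B}\rangle_{\leq k}$ is the set of relations pp-definable over $\mathcal{A}\cup\mathcal{B}$ (formulas $\exists\bar y\,\bigwedge_i R_i(\mathbf{x}_i)$ with $R_i$ relations of $\mathcal{A}\cup\mathcal{B}$ or equality) using at most $k$ atoms with relations from $\mathcal{B}$. $\mathrm{CSP}_{\le k}(\mathcal{A},\mathcal{B})$: given an instance $(V,C_1\cup C_2)$ with $C_1$ over $\mathcal{A}$, $C_2$ over $\mathcal{B}$, $|C_2|\le k$, decide satisfiability. *)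

theory Defs
  imports Main
begin

datatype fo = FEq nat nat | FNeg fo | FConj fo fo | FDisj fo fo | FEx nat fo

fun fo_sat :: "fo \<Rightarrow> (nat \<Rightarrow> nat) \<Rightarrow> bool" where
  "fo_sat (FEq i j) s = (s i = s j)"
| "fo_sat (FNeg f) s = (\<not> fo_sat f s)"
| "fo_sat (FConj f g) s = (fo_sat f s \<and> fo_sat g s)"
| "fo_sat (FDisj f g) s = (fo_sat f s \<or> fo_sat g s)"
| "fo_sat (FEx x f) s = (\<exists>a. fo_sat f (s(x := a)))"

fun fo_fv :: "fo \<Rightarrow> nat set" where
  "fo_fv (FEq i j) = {i, j}"
| "fo_fv (FNeg f) = fo_fv f"
| "fo_fv (FConj f g) = fo_fv f \<union> fo_fv g"
| "fo_fv (FDisj f g) = fo_fv f \<union> fo_fv g"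
| "fo_fv (FEx x f) = fo_fv f - {x}"

text \<open>A relation on nat of arity n is represented by its arity together with a set of
  tuples (lists of length n).\<close>

type_synonym relation = "nat \<times> nat list set"

definition fo_definable :: "relation \<Rightarrow> bool" where
  "fo_definable R \<longleftrightarrow> (\<exists>\<phi>. fo_fv \<phi> \<subseteq> {..<fst R} \<and>
      snd R = {t. length t = fst R \<and> fo_sat \<phi> (\<lambda>i. t ! i)})"

text \<open>An equality language: a structure with domain nat and a finite signature
  (the list of its relations, indexed by relation symbols 0..length-1) whose relations
  are all first-order definable in (nat; =).\<close>

definition equality_language :: "relation list \<Rightarrow> bool" where
  "equality_language L \<longleftrightarrow> (\<forall>R\<in>set L. fo_definable R)"

definition neq_rel :: "nat \<Rightarrow> relation" where
  "neq_rel r = (r, {t. length t = r \<and> card (set t) = r})"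

text \<open>An atom (i, xs): relation symbol i of the language applied to variable tuple xs.\<close>

definition atom_holds :: "relation list \<Rightarrow> ('v \<Rightarrow> nat) \<Rightarrow> nat \<times> 'v list \<Rightarrow> bool" where
  "atom_holds L s a \<longleftrightarrow> fst a < length L \<and> length (snd a) = fst (L ! fst a)
      \<and> map s (snd a) \<in> snd (L ! fst a)"

text \<open>pp-definability over A \<union> B with at most k atoms using relations of B.
  A pp-formula of arity r has free variables 0..r-1, and all other variables are
  existentially quantified; its atoms are A-atoms, B-atoms (at most k occurrences)
  and equality atoms.\<close>

definition pp_le :: "relation list \<Rightarrow> relation list \<Rightarrow> nat \<Rightarrow> relation set" where
  "pp_le A B k = {R. \<exists>(AA :: (nat \<times> nat list) list) (BB :: (nat \<times> nat list) list)
        (EE :: (nat \<times> nat) list).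
      length BB \<le> k \<and>
      snd R = {t. length t = fst R \<and>
        (\<exists>e :: nat \<Rightarrow> nat. (\<forall>i < fst R. e i = t ! i) \<and>
           (\<forall>a\<in>set AA. atom_holds A e a) \<and>
           (\<forall>a\<in>set BB. atom_holds B e a) \<and>
           (\<forall>(u, v)\<in>set EE. e u = e v))}}"

definition csp_instance ::
  "relation list \<Rightarrow> relation list \<Rightarrow> nat \<Rightarrow> 'v set \<Rightarrow> (nat \<times> 'v list) set \<Rightarrow> (nat \<times> 'v list) set \<Rightarrow> bool"
where
  "csp_instance A B k V C1 C2 \<longleftrightarrow> finite V \<and> finite C1 \<and> finite C2 \<and> card C2 \<le> k \<and>
     (\<forall>(i, xs)\<in>C1. i < length A \<and> length xs = fst (A ! i) \<and> set xs \<subseteq> V) \<and>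
     (\<forall>(i, xs)\<in>C2. i < length B \<and> length xs = fst (B ! i) \<and> set xs \<subseteq> V)"

definition csp_solution ::
  "relation list \<Rightarrow> relation list \<Rightarrow> (nat \<times> 'v list) set \<Rightarrow> (nat \<times> 'v list) set \<Rightarrow> ('v \<Rightarrow> nat) \<Rightarrow> bool"
where
  "csp_solution A B C1 C2 s \<longleftrightarrow> (\<forall>a\<in>C1. atom_holds A s a) \<and> (\<forall>a\<in>C2. atom_holds B s a)"

end

theory Submission
  imports Defs
begin

lemma fo_sat_cong:
  "(\<forall>i\<in>fo_fv \<phi>. s i = s' i) \<Longrightarrow> fo_sat \<phi> s = fo_sat \<phi> s'"
proof (induction \<phi> arbitrary: s s')
  case (FEx x f)
  have "\<And>a. fo_sat f (s(x := a)) = fo_sat f (s'(x := a))"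
    using FEx.IH FEx.prems by auto
  then show ?case by simp
next
  case (FConj f g)
  have "fo_sat f s = fo_sat f s'" "fo_sat g s = fo_sat g s'"
    using FConj.prems by (auto intro!: FConj.IH)
  then show ?case by simp
next
  case (FDisj f g)
  have "fo_sat f s = fo_sat f s'" "fo_sat g s = fo_sat g s'"
    using FDisj.prems by (auto intro!: FDisj.IH)
  then show ?case by simp
qed auto

lemma fo_sat_bij:
  assumes "bij \<pi>"
  shows "fo_sat \<phi> (\<pi> \<circ> s) = fo_sat \<phi> s"
proof (induction \<phi> arbitrary: s)
  case (FEq i j)
  then show ?case using assms by (simp add: bij_def inj_eq)
next
  case (FEx x f)
  have eq: "(\<pi> \<circ> s)(x := a) = \<pi> \<circ> (s(x := inv \<pi> a))" for a
    using assms by (auto simp: bij_def surj_f_inv_f)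
  have "fo_sat (FEx x f) (\<pi> \<circ> s) = (\<exists>a. fo_sat f (s(x := inv \<pi> a)))"
    using FEx.IH by (simp only: fo_sat.simps eq)
  also have "\<dots> = (\<exists>b. fo_sat f (s(x := b)))"
    using assms by (metis bij_def inv_f_f)
  finally show ?case by (simp only: fo_sat.simps(5)[of x f s])
qed auto

lemma fo_def_bij:
  assumes "fo_definable R" "bij \<pi>" "t \<in> snd R"
  shows "map \<pi> t \<in> snd R"
proof -
  obtain \<phi> where phi: "fo_fv \<phi> \<subseteq> {..<fst R}"
    "snd R = {t. length t = fst R \<and> fo_sat \<phi> (\<lambda>i. t ! i)}"
    using assms(1) unfolding fo_definable_def by blast
  have lt: "length t = fst R" and st: "fo_sat \<phi> (\<lambda>i. t ! i)" using assms(3) phi by auto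
  have "fo_sat \<phi> (\<lambda>i. map \<pi> t ! i) = fo_sat \<phi> (\<pi> \<circ> (\<lambda>i. t ! i))"
    by (rule fo_sat_cong) (use phi(1) lt in auto)
  also have "\<dots>" using st fo_sat_bij[OF assms(2)] by simp
  finally show ?thesis using phi lt by simp
qed

lemma atom_bij:
  assumes "equality_language L" "bij \<pi>" "atom_holds L s a"
  shows "atom_holds L (\<pi> \<circ> s) a"
proof -
  have "L ! fst a \<in> set L" using assms(3) unfolding atom_holds_def by auto
  then have "fo_definable (L ! fst a)" using assms(1) unfolding equality_language_def by auto
  then show ?thesis using assms(3) fo_def_bij[OF _ assms(2)]
    unfolding atom_holds_def by (simp flip: map_map)
qed

lemma sol_bij:
  assumes "equality_language A" "equality_language B" "bij \<pi>" "csp_solution A B C1 C2 s"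
  shows "csp_solution A B C1 C2 (\<pi> \<circ> s)"
  using assms atom_bij unfolding csp_solution_def by blast

lemma atom_map:
  "atom_holds L e (i, map \<rho> xs) = atom_holds L (e \<circ> \<rho>) (i, xs)"
  unfolding atom_holds_def by simp

definition swp :: "nat \<Rightarrow> nat \<Rightarrow> nat \<Rightarrow> nat" where
  "swp a b z = (if z = a then b else if z = b then a else z)"

lemma bij_swp: "bij (swp a b)"
  by (rule o_bij[of "swp a b"]) (auto simp: swp_def fun_eq_iff)

lemma extend_bij:
  "distinct xs \<Longrightarrow> distinct ys \<Longrightarrow> length xs = length ys \<Longrightarrow>
    \<exists>\<pi>::nat\<Rightarrow>nat. bij \<pi> \<and> map \<pi> xs = ys"
proof (induction xs arbitrary: ys)
  case Nil
  then show ?case by (auto intro: bij_id)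
next
  case (Cons x xs)
  then obtain y ys' where ys: "ys = y # ys'" by (cases ys) auto
  with Cons obtain \<pi> where p: "bij \<pi>" "map \<pi> xs = ys'" by auto
  define \<sigma> where "\<sigma> = swp (\<pi> x) y \<circ> \<pi>"
  have "bij \<sigma>" unfolding \<sigma>_def using p(1) bij_swp bij_comp by blast
  moreover have "\<sigma> x = y" by (simp add: \<sigma>_def swp_def)
  moreover have "map \<sigma> xs = ys'"
  proof -
    have "\<sigma> z = \<pi> z" if "z \<in> set xs" for z
    proof -
      have "\<pi> z \<in> set ys'" using p(2) that by auto
      then have "\<pi> z \<noteq> y" using Cons.prems ys by auto
      moreover have "z \<noteq> x" using Cons.prems(1) that by auto
      then have "\<pi> z \<noteq> \<pi> x" using p(1) by (simp add: bij_def inj_eq)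
      ultimately show ?thesis by (simp add: \<sigma>_def swp_def)
    qed
    then show ?thesis using p(2) by (metis map_eq_conv)
  qed
  ultimately show ?case using ys by auto
qed

theorem lemma23:
  fixes A B :: "relation list" and c k :: nat
    and V :: "'v set" and C1 C2 :: "(nat \<times> 'v list) set"
  assumes "equality_language A" and "equality_language B" and "c \<ge> 1"
    and "neq_rel (c + 1) \<notin> pp_le A B k"
    and "csp_instance A B k V C1 C2"
    and "\<exists>s. csp_solution A B C1 C2 s"
  shows "\<exists>s. csp_solution A B C1 C2 s \<and> s ` V \<subseteq> {1..c}"
proof -
  obtain s where sol: "csp_solution A B C1 C2 s"
    and mn: "\<And>s'. csp_solution A B C1 C2 s' \<Longrightarrow> card (s ` V) \<le> card (s' ` V)"
    using assms(6) ex_has_least_nat[where m = "\<lambda>s. card (s ` V)"] by metis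
  have finV: "finite V" and finC1: "finite C1" and finC2: "finite C2" and cardC2: "card C2 \<le> k"
    using assms(5) unfolding csp_instance_def by auto
  define m where "m = card (s ` V)"
  define vals where "vals = sorted_list_of_set (s ` V)"
  have vals: "distinct vals" "set vals = s ` V" "length vals = m"
    using finV by (auto simp: vals_def m_def)
  show ?thesis
  proof (cases "m \<le> c")
    case True
    obtain \<pi> where p: "bij \<pi>" "map \<pi> vals = [1..<m+1]"
      using extend_bij[OF vals(1) distinct_upt, of 1 "m+1"] vals(3) length_upt[of 1 "m+1"] by (auto simp del: upt_Suc)
    have "(\<pi> \<circ> s) ` V = \<pi> ` set vals" using vals by (simp add: image_comp)
    also have "\<dots> = set [1..<m+1]" using p(2) by (metis set_map)
    finally have "(\<pi> \<circ> s) ` V \<subseteq> {1..c}" using True by auto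
    moreover have "csp_solution A B C1 C2 (\<pi> \<circ> s)"
      using sol_bij[OF assms(1,2) p(1) sol] .
    ultimately show ?thesis by blast
  next
    case False
    obtain \<pi>0 where p0: "bij \<pi>0" "map \<pi>0 vals = [0..<m]"
      using extend_bij[OF vals(1) distinct_upt, of 0 "m"] vals(3) length_upt[of 0 m] by (auto simp del: upt_Suc)
    define \<rho> where "\<rho> = \<pi>0 \<circ> s"
    have rhoV: "\<rho> ` V = {0..<m}"
    proof -
      have "\<rho> ` V = \<pi>0 ` set vals" using vals by (simp add: image_comp \<rho>_def)
      also have "\<dots> = set [0..<m]" using p0(2) by (metis set_map)
      finally show ?thesis by simp
    qed
    obtain l1 where l1: "set l1 = C1" using finC1 finite_list by blast
    obtain l2 where l2: "set l2 = C2" "distinct l2" using finC2 finite_distinct_list by blast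
    define AA where "AA = map (\<lambda>(i, xs). (i, map \<rho> xs)) l1"
    define BB where "BB = map (\<lambda>(i, xs). (i, map \<rho> xs)) l2"
    have AAe: "(\<forall>a\<in>set AA. atom_holds A e a) = (\<forall>a\<in>C1. atom_holds A (e \<circ> \<rho>) a)" for e
      unfolding AA_def using l1 by (auto simp: atom_map)
    have BBe: "(\<forall>a\<in>set BB. atom_holds B e a) = (\<forall>a\<in>C2. atom_holds B (e \<circ> \<rho>) a)" for e
      unfolding BB_def using l2 by (auto simp: atom_map)
    have lenBB: "length BB \<le> k" using l2 cardC2 distinct_card by (fastforce simp: BB_def)
    have "snd (neq_rel (c + 1)) = {t. length t = fst (neq_rel (c + 1)) \<and>
        (\<exists>e :: nat \<Rightarrow> nat. (\<forall>i < fst (neq_rel (c + 1)). e i = t ! i) \<and>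
           (\<forall>a\<in>set AA. atom_holds A e a) \<and>
           (\<forall>a\<in>set BB. atom_holds B e a) \<and>
           (\<forall>(u, v)\<in>set ([] :: (nat \<times> nat) list). e u = e v))}"
      (is "_ = ?R")
    proof (rule set_eqI, rule iffI)
      fix t assume "t \<in> snd (neq_rel (c + 1))"
      then have lt: "length t = c + 1" and ct: "card (set t) = c + 1" by (auto simp: neq_rel_def)
      then have dt: "distinct t" using card_distinct by metis
      obtain \<sigma> where sg: "bij \<sigma>" "map \<sigma> [0..<c+1] = t"
        using extend_bij[OF distinct_upt dt, of 0] lt length_upt[of 0 "c+1"] by (auto simp del: upt_Suc)
      have e1: "\<forall>i < c + 1. \<sigma> i = t ! i" using sg(2) by (auto simp del: upt_Suc)
      have "\<sigma> \<circ> \<rho> = (\<sigma> \<circ> \<pi>0) \<circ> s" by (simp add: \<rho>_def comp_assoc)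
      moreover have "csp_solution A B C1 C2 ((\<sigma> \<circ> \<pi>0) \<circ> s)"
        using sol_bij[OF assms(1,2) _ sol] bij_comp[OF p0(1) sg(1)] by blast
      ultimately have "csp_solution A B C1 C2 (\<sigma> \<circ> \<rho>)" by simp
      then show "t \<in> ?R" using e1 lt AAe BBe unfolding csp_solution_def
        by (auto simp: neq_rel_def)
    next
      fix t assume "t \<in> ?R"
      then obtain e where lt: "length t = c + 1" and e1: "\<forall>i < c + 1. e i = t ! i"
        and ea: "\<forall>a\<in>set AA. atom_holds A e a" and eb: "\<forall>a\<in>set BB. atom_holds B e a"
        by (auto simp: neq_rel_def)
      have "csp_solution A B C1 C2 (e \<circ> \<rho>)" using ea eb AAe BBe
        unfolding csp_solution_def by blast
      then have "m \<le> card ((e \<circ> \<rho>) ` V)" using mn m_def by blast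
      also have "(e \<circ> \<rho>) ` V = e ` {0..<m}" using rhoV by (metis image_comp)
      finally have "m \<le> card (e ` {0..<m})" .
      moreover have "card (e ` {0..<m}) \<le> m" using card_image_le[of "{0..<m}" e] by simp
      ultimately have "inj_on e {0..<m}" by (intro eq_card_imp_inj_on) auto
      moreover have "t = map e [0..<c+1]" using lt e1 by (intro nth_equalityI) (auto simp del: upt_Suc)
      moreover have "{0..<c+1} \<subseteq> {0..<m}" using False by auto
      ultimately have "distinct t"
        by (metis distinct_map distinct_upt inj_on_subset set_upt)
      then have "card (set t) = c + 1" using lt distinct_card by metis
      then show "t \<in> snd (neq_rel (c + 1))" using lt by (auto simp: neq_rel_def)
    qed
    then have "neq_rel (c + 1) \<in> pp_le A B k" using lenBB unfolding pp_le_def by blast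
    then show ?thesis using assms(4) by blast
  qed
qed

end
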